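(* Let $Q$ and $W$ satisfy the standing assumptions with $W=Y$, let $l\ge1$, and assume $Q$ is future unique w.r.t. $I^l_l$. Then $\hat Q^{l\triangledown}$ and $\hat Q^{I^l_l}$ are bisimilar w.r.t. $Y$, and $\hat Q^{I^l_l}$ is simulated by $\hat Q^{I^l_0}$ w.r.t. $Y$.
   Context: Strings and signals: $\diamond$ is a symbol not in any other set considered. For a set $A$ and $l\in\mathbb N_0$, $A^l$ is the set of strings of length $l$ over $A$, indexed $\zeta=\zeta(0)\cdots\zeta(l-1)$; $\lambda$ is the empty string and $\cdot$ denotes concatenation. For a map $w$ on $\mathbb Z$ (or a string) and integers $t_1\le t_2$, $w|_{[t_1,t_2]}=w(t_1)\cdots w(t_2)$ is the string of length $t_2-t_1+1$ (absolute time forgotten); if $t_2<t_1$ it is $\lambda$. State machines: a state machine is $Q=(X,U,Y,\delta,X_0)$ with $X_0\subseteq X$, $\delta\subseteq X\times U\times Y\times X$. Let $H_\delta(x)=\{y:\exists u,x'.\,(x,u,y,x')\in\delta\}$, $F_\delta(x,u)=\{x':\exists y\in H_\delta(x).\,(x,u,y,x')\in\delta\}$. The full behavior $\mathcal B_f(Q)$ is the set of $(\mu,\nu,\xi)\in(U\times Y\times X)^{\mathbb N_0}$ with $\xi(0)\in X_0$ and $(\xi(k),\mu(k),\nu(k),\xi(k+1))\in\delta$ for all $k\in\mathbb N_0$. $Q$ is live and reachable if every $x\in X_0$ is $\xi(0)$ for some $(\mu,\nu,\xi)\in\mathcal B_f(Q)$ and every $x\in X$ is $\xi(k)$ for some such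 trajectory and some $k$. Standing assumptions: $Q=(X,U,Y,\delta,X_0)$ is live and reachable and satisfies $(x,u,y,x')\in\delta\iff(x'\in F_\delta(x,u)\wedge y\in H_\delta(x))$ for all $x,x'\in X,u\in U,y\in Y$; the external signal space $W$ is finite and either $W=U\times Y$ or $W=Y$ (here $W=Y$, with $\pi_W(u,y)=\pi_Y(u,y)=y$). Behaviors: $\mathcal B_S(Q)$ is the set of pairs $(w,\xi)$ of maps on $\mathbb Z$ with $w(k)=\xi(k)=\diamond$ for $k<0$ and $(w(k),\xi(k))=(\nu(k),\xi'(k))$ for $k\ge0$, for some $(\mu,\nu,\xi')\in\mathcal B_f(Q)$. Corresponding strings: for integers $a,b$ and $x\in X$, $E^{[a,b]}(x)=\{\zeta:\exists(w,\xi)\in\mathcal B_S(Q),k\in\mathbb N_0:\ \xi(k)=x,\ \zeta=w|_{[k+a,k+b]}\}$. For $l,m\in\mathbb N_0$ with $m\le l$, $I^l_m=[m-l,m-1]$; in particular $I^l_l=[0,l-1]$, $I^l_0=[-l,-1]$. Future uniqueness: $Q$ is future unique w.r.t. $I^l_m$ if for all $x\in X$ and $\zeta,\zeta'\in E^{I^l_m}(x)$, $\zeta|_{[l-m,l-1]}=\zeta'|_{[l-m,l-1]}$. Abstract state machine: $\hat Q^{I^l_m}=(\hat X^{I^l_m},U,Y,\hat\delta^{I^l_m},\hat X^{I^l_m}_0)$ with $\hat X^{I^l_m}=\bigcup_{x\in X}E^{I^l_m}(x)$, $\hat X^{I^l_m}_0=\bigcup_{x\in X_0}E^{I^l_m}(x)$,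 and $(\hat x,u,y,\hat x')\in\hat\delta^{I^l_m}$ iff (1) $\hat x'|_{[0,l-m-1]}=(\hat x|_{[0,l-m-1]}\cdot\pi_W(u,y))|_{[1,l-m]}$, (2) $\hat x|_{[l-m,l-1]}=(\pi_W(u,y)\cdot\hat x'|_{[l-m,l-2]})|_{[0,m-1]}$, and (3) there are $x,x'\in X$ with $\hat x\in E^{I^l_m}(x)$, $\hat x'\in E^{I^l_m}(x')$, $(x,u,y,x')\in\delta$. Quotient state machine (for $W=Y$): $\hat Q^{l\triangledown}=(\hat X^{l\triangledown},U,Y,\hat\delta^{l\triangledown},\hat X^{l\triangledown}_0)$ with $\hat X^{l\triangledown}=\{E^{I^l_l}(x):x\in X\}$, $\hat X^{l\triangledown}_0=\{E^{I^l_l}(x):x\in X_0\}$, and $(\hat x,u,y,\hat x')\in\hat\delta^{l\triangledown}$ iff there exist $x,x'\in X$ with $\hat x=E^{I^l_l}(x)$, $\hat x'=E^{I^l_l}(x')$ and $(x,u,y,x')\in\delta$. Simulation relations: for state machines $Q_i=(X_i,U,Y,\delta_i,X_{0,i})$, $i=1,2$, and $V\in\{U\times Y,Y\}$, a relation $\mathcal R\subseteq X_1\times X_2$ is a simulation relation from $Q_1$ to $Q_2$ w.r.t. $V$ if (a) for every $x_1\in X_{0,1}$ there is $x_2\in X_{0,2}$ with $(x_1,x_2)\in\mathcal R$, and (b) for all $(x_1,x_2)\in\mathcal R$ and $(x_1,u_1,y_1,x_1')\in\delta_1$ there exist $u_2,y_2,x_2'$ with $(x_2,u_2,y_2,x_2')\in\delta_2$,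 $(x_1',x_2')\in\mathcal R$ and $\pi_V(u_1,y_1)=\pi_V(u_2,y_2)$. $Q_1$ is simulated by $Q_2$ w.r.t. $V$ if such a relation exists; $Q_1,Q_2$ are bisimilar w.r.t. $V$ if there is a simulation relation $\mathcal R$ from $Q_1$ to $Q_2$ w.r.t. $V$ such that $\mathcal R^{-1}=\{(x_2,x_1):(x_1,x_2)\in\mathcal R\}$ is a simulation relation from $Q_2$ to $Q_1$ w.r.t. $V$. *)

theory Defs
  imports Main
begin

(* State machine Q = (X, U, Y, delta, X0). The symbol \<diamond> is modelled by None,
   so signal values / string symbols over W = Y are of type 'y option. *)
record ('x, 'u, 'y) sm =
  SX :: "'x set"
  SU :: "'u set"
  SY :: "'y set"
  Sdelta :: "('x \<times> 'u \<times> 'y \<times> 'x) set"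
  SX0 :: "'x set"

definition is_state_machine :: "('x, 'u, 'y) sm \<Rightarrow> bool" where
  "is_state_machine Q \<longleftrightarrow> SX0 Q \<subseteq> SX Q \<and> Sdelta Q \<subseteq> SX Q \<times> SU Q \<times> SY Q \<times> SX Q"

definition Hd :: "('x, 'u, 'y) sm \<Rightarrow> 'x \<Rightarrow> 'y set" where
  "Hd Q x = {y. \<exists>u x'. (x, u, y, x') \<in> Sdelta Q}"

definition Fd :: "('x, 'u, 'y) sm \<Rightarrow> 'x \<Rightarrow> 'u \<Rightarrow> 'x set" where
  "Fd Q x u = {x'. \<exists>y\<in>Hd Q x. (x, u, y, x') \<in> Sdelta Q}"

definition full_behavior :: "('x, 'u, 'y) sm \<Rightarrow> ((nat \<Rightarrow> 'u) \<times> (nat \<Rightarrow> 'y) \<times> (nat \<Rightarrow> 'x)) set" where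
  "full_behavior Q = {(\<mu>, \<nu>, \<xi>).
     (\<forall>k. \<mu> k \<in> SU Q \<and> \<nu> k \<in> SY Q \<and> \<xi> k \<in> SX Q) \<and> \<xi> 0 \<in> SX0 Q \<and>
     (\<forall>k. (\<xi> k, \<mu> k, \<nu> k, \<xi> (Suc k)) \<in> Sdelta Q)}"

definition live_reachable :: "('x, 'u, 'y) sm \<Rightarrow> bool" where
  "live_reachable Q \<longleftrightarrow>
     (\<forall>x\<in>SX0 Q. \<exists>\<mu> \<nu> \<xi>. (\<mu>, \<nu>, \<xi>) \<in> full_behavior Q \<and> \<xi> 0 = x) \<and>
     (\<forall>x\<in>SX Q. \<exists>\<mu> \<nu> \<xi> k. (\<mu>, \<nu>, \<xi>) \<in> full_behavior Q \<and> \<xi> k = x)"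

definition standing_assms_Y :: "('x, 'u, 'y) sm \<Rightarrow> bool" where
  "standing_assms_Y Q \<longleftrightarrow> is_state_machine Q \<and> live_reachable Q \<and>
     (\<forall>x\<in>SX Q. \<forall>u\<in>SU Q. \<forall>y\<in>SY Q. \<forall>x'\<in>SX Q.
        (x, u, y, x') \<in> Sdelta Q \<longleftrightarrow> (x' \<in> Fd Q x u \<and> y \<in> Hd Q x)) \<and>
     finite (SY Q)"

definition behS :: "('x, 'u, 'y) sm \<Rightarrow> ((int \<Rightarrow> 'y option) \<times> (int \<Rightarrow> 'x option)) set" where
  "behS Q = {(w, \<xi>). \<exists>\<mu> \<nu> \<xi>'. (\<mu>, \<nu>, \<xi>') \<in> full_behavior Q \<and>
     (\<forall>k::int. (k < 0 \<longrightarrow> w k = None \<and> \<xi> k = None) \<and>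
               (0 \<le> k \<longrightarrow> w k = Some (\<nu> (nat k)) \<and> \<xi> k = Some (\<xi>' (nat k))))}"

definition sig_restr :: "(int \<Rightarrow> 'a) \<Rightarrow> int \<Rightarrow> int \<Rightarrow> 'a list" where
  "sig_restr w t1 t2 = map w [t1..t2]"

(* \<zeta>|_[t1,t2] for a string (list), indices 0-based *)
definition str_restr :: "'a list \<Rightarrow> int \<Rightarrow> int \<Rightarrow> 'a list" where
  "str_restr \<zeta> t1 t2 = map (\<lambda>i. \<zeta> ! nat i) [t1..t2]"

definition Estr :: "('x, 'u, 'y) sm \<Rightarrow> int \<Rightarrow> int \<Rightarrow> 'x \<Rightarrow> 'y option list set" where
  "Estr Q a b x = {\<zeta>. \<exists>w \<xi> k. (w, \<xi>) \<in> behS Q \<and> \<xi> (int k) = Some x \<and>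
                        \<zeta> = sig_restr w (int k + a) (int k + b)}"

definition EI :: "('x, 'u, 'y) sm \<Rightarrow> nat \<Rightarrow> nat \<Rightarrow> 'x \<Rightarrow> 'y option list set" where
  "EI Q l m x = Estr Q (int m - int l) (int m - 1) x"

definition future_unique :: "('x, 'u, 'y) sm \<Rightarrow> nat \<Rightarrow> nat \<Rightarrow> bool" where
  "future_unique Q l m \<longleftrightarrow>
     (\<forall>x\<in>SX Q. \<forall>\<zeta>\<in>EI Q l m x. \<forall>\<zeta>'\<in>EI Q l m x.
        str_restr \<zeta> (int l - int m) (int l - 1) = str_restr \<zeta>' (int l - int m) (int l - 1))"

(* abstract state machine \<hat>Q^{I^l_m} for W = Y (\<pi>_W(u,y) = y) *)
definition abstract_sm :: "('x, 'u, 'y) sm \<Rightarrow> nat \<Rightarrow> nat \<Rightarrow> ('y option list, 'u, 'y) sm" where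
  "abstract_sm Q l m =
     \<lparr> SX = (\<Union>x\<in>SX Q. EI Q l m x), SU = SU Q, SY = SY Q,
       Sdelta = {(xh, u, y, xh').
          str_restr xh' 0 (int l - int m - 1) =
            str_restr (str_restr xh 0 (int l - int m - 1) @ [Some y]) 1 (int l - int m) \<and>
          str_restr xh (int l - int m) (int l - 1) =
            str_restr ([Some y] @ str_restr xh' (int l - int m) (int l - 2)) 0 (int m - 1) \<and>
          (\<exists>x\<in>SX Q. \<exists>x'\<in>SX Q. xh \<in> EI Q l m x \<and> xh' \<in> EI Q l m x' \<and> (x, u, y, x') \<in> Sdelta Q)},
       SX0 = (\<Union>x\<in>SX0 Q. EI Q l m x) \<rparr>"

definition quotient_sm :: "('x, 'u, 'y) sm \<Rightarrow> nat \<Rightarrow> ('y option list set, 'u, 'y) sm" where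
  "quotient_sm Q l =
     \<lparr> SX = {EI Q l l x | x. x \<in> SX Q}, SU = SU Q, SY = SY Q,
       Sdelta = {(xh, u, y, xh'). \<exists>x\<in>SX Q. \<exists>x'\<in>SX Q.
          xh = EI Q l l x \<and> xh' = EI Q l l x' \<and> (x, u, y, x') \<in> Sdelta Q},
       SX0 = {EI Q l l x | x. x \<in> SX0 Q} \<rparr>"

definition sim_rel_Y :: "('a, 'u, 'y) sm \<Rightarrow> ('b, 'u, 'y) sm \<Rightarrow> ('a \<times> 'b) set \<Rightarrow> bool" where
  "sim_rel_Y Q1 Q2 R \<longleftrightarrow> R \<subseteq> SX Q1 \<times> SX Q2 \<and>
     (\<forall>x1\<in>SX0 Q1. \<exists>x2\<in>SX0 Q2. (x1, x2) \<in> R) \<and>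
     (\<forall>x1 x2 u1 y1 x1'. (x1, x2) \<in> R \<and> (x1, u1, y1, x1') \<in> Sdelta Q1 \<longrightarrow>
        (\<exists>u2 y2 x2'. (x2, u2, y2, x2') \<in> Sdelta Q2 \<and> (x1', x2') \<in> R \<and> y1 = y2))"

definition simulated_by_Y :: "('a, 'u, 'y) sm \<Rightarrow> ('b, 'u, 'y) sm \<Rightarrow> bool" where
  "simulated_by_Y Q1 Q2 \<longleftrightarrow> (\<exists>R. sim_rel_Y Q1 Q2 R)"

definition bisimilar_Y :: "('a, 'u, 'y) sm \<Rightarrow> ('b, 'u, 'y) sm \<Rightarrow> bool" where
  "bisimilar_Y Q1 Q2 \<longleftrightarrow> (\<exists>R. sim_rel_Y Q1 Q2 R \<and> sim_rel_Y Q2 Q1 (converse R))"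

end

theory Submission imports Defs begin

lemma map_upto_eq: "map f [a..b] = map (\<lambda>j. f (a + int j)) [0..<nat(b-a+1)]"
  by (rule nth_equalityI) auto

definition wv :: "(nat \<Rightarrow> 'y) \<Rightarrow> int \<Rightarrow> 'y option" where
  "wv \<nu> i = (if i < 0 then None else Some (\<nu> (nat i)))"

definition fut :: "(nat \<Rightarrow> 'y) \<Rightarrow> nat \<Rightarrow> nat \<Rightarrow> 'y option list" where
  "fut \<nu> k l = map (\<lambda>j. Some (\<nu> (k + j))) [0..<l]"

definition past :: "(nat \<Rightarrow> 'y) \<Rightarrow> nat \<Rightarrow> nat \<Rightarrow> 'y option list" where
  "past \<nu> k l = map (\<lambda>j. if k + j < l then None else Some (\<nu> (k + j - l))) [0..<l]"

lemma behS_char: "(w, \<xi>) \<in> behS Q \<longleftrightarrow> (\<exists>\<mu> \<nu> \<xi>'. (\<mu>, \<nu>, \<xi>') \<in> full_behavior Q \<and>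
   w = wv \<nu> \<and> \<xi> = (\<lambda>i. if i < 0 then None else Some (\<xi>' (nat i))))"
  unfolding behS_def wv_def by (auto simp: fun_eq_iff) (metis not_less)+

lemma Estr_char: "\<zeta> \<in> Estr Q a b x \<longleftrightarrow> (\<exists>\<mu> \<nu> \<xi> k. (\<mu>, \<nu>, \<xi>) \<in> full_behavior Q \<and> \<xi> k = x \<and>
    \<zeta> = map (\<lambda>j. wv \<nu> (int k + a + int j)) [0..<nat(b-a+1)])"
proof
  assume "\<zeta> \<in> Estr Q a b x"
  then show "\<exists>\<mu> \<nu> \<xi> k. (\<mu>, \<nu>, \<xi>) \<in> full_behavior Q \<and> \<xi> k = x \<and>
    \<zeta> = map (\<lambda>j. wv \<nu> (int k + a + int j)) [0..<nat(b-a+1)]"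
    unfolding Estr_def behS_char sig_restr_def map_upto_eq
    by (auto split: if_splits) blast
next
  assume "\<exists>\<mu> \<nu> \<xi> k. (\<mu>, \<nu>, \<xi>) \<in> full_behavior Q \<and> \<xi> k = x \<and>
    \<zeta> = map (\<lambda>j. wv \<nu> (int k + a + int j)) [0..<nat(b-a+1)]"
  then obtain \<mu> \<nu> \<xi> k where h: "(\<mu>, \<nu>, \<xi>) \<in> full_behavior Q" "\<xi> k = x"
    "\<zeta> = map (\<lambda>j. wv \<nu> (int k + a + int j)) [0..<nat(b-a+1)]" by blast
  let ?w = "wv \<nu>" and ?x = "(\<lambda>i::int. if i < 0 then None else Some (\<xi> (nat i)))"
  have "(?w, ?x) \<in> behS Q" unfolding behS_char using h by blast
  moreover have "?x (int k) = Some x" using h by simp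
  moreover have "\<zeta> = sig_restr ?w (int k + a) (int k + b)"
    unfolding sig_restr_def map_upto_eq h by (simp add: algebra_simps)
  ultimately show "\<zeta> \<in> Estr Q a b x" unfolding Estr_def by blast
qed

lemma EI_ll: "\<zeta> \<in> EI Q l l x \<longleftrightarrow> (\<exists>\<mu> \<nu> \<xi> k. (\<mu>, \<nu>, \<xi>) \<in> full_behavior Q \<and> \<xi> k = x \<and> \<zeta> = fut \<nu> k l)"
proof -
  have "\<And>\<nu> k. map (\<lambda>j. wv \<nu> (int k + (int l - int l) + int j)) [0..<nat(int l - 1 - (int l - int l) + 1)] = fut \<nu> k l"
    unfolding fut_def wv_def by (auto simp: nat_add_distrib)
  then show ?thesis unfolding EI_def Estr_char by metis
qed

lemma nat_aux: "\<not> k + i < l \<Longrightarrow> nat (int k - int l + int i) = k + i - l" by arith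

lemma EI_l0: "\<zeta> \<in> EI Q l 0 x \<longleftrightarrow> (\<exists>\<mu> \<nu> \<xi> k. (\<mu>, \<nu>, \<xi>) \<in> full_behavior Q \<and> \<xi> k = x \<and> \<zeta> = past \<nu> k l)"
proof -
  have "\<And>\<nu> k. map (\<lambda>j. wv \<nu> (int k + (int 0 - int l) + int j)) [0..<nat(int 0 - 1 - (int 0 - int l) + 1)] = past \<nu> k l"
    unfolding past_def wv_def by (rule nth_equalityI) (auto simp: nat_aux)
  then show ?thesis unfolding EI_def Estr_char by metis
qed

lemma str_restr_eq: "str_restr xs a b = map (\<lambda>j. xs ! nat (a + int j)) [0..<nat(b-a+1)]"
  unfolding str_restr_def map_upto_eq ..

lemma sr_empty: "b < a \<Longrightarrow> str_restr xs a b = []"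
  unfolding str_restr_def by simp

lemma sr_take: "n \<le> length xs \<Longrightarrow> str_restr xs 0 (int n - 1) = take n xs"
  unfolding str_restr_eq by (rule nth_equalityI) auto

lemma sr_tl: "length xs = Suc n \<Longrightarrow> str_restr xs 1 (int n) = tl xs"
  unfolding str_restr_eq by (rule nth_equalityI) (auto simp: nth_tl nat_add_distrib)

lemma len_EI_ll: "\<zeta> \<in> EI Q l l x \<Longrightarrow> length \<zeta> = l"
  unfolding EI_ll fut_def by auto

lemma len_EI_l0: "\<zeta> \<in> EI Q l 0 x \<Longrightarrow> length \<zeta> = l"
  unfolding EI_l0 past_def by auto

lemma fb_props: "(\<mu>, \<nu>, \<xi>) \<in> full_behavior Q \<Longrightarrow>
  \<mu> k \<in> SU Q \<and> \<nu> k \<in> SY Q \<and> \<xi> k \<in> SX Q \<and> \<xi> 0 \<in> SX0 Q \<and> (\<xi> k, \<mu> k, \<nu> k, \<xi> (Suc k)) \<in> Sdelta Q"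
  unfolding full_behavior_def by auto

lemma delta_in: "standing_assms_Y Q \<Longrightarrow> (x, u, y, x') \<in> Sdelta Q \<Longrightarrow>
   x \<in> SX Q \<and> u \<in> SU Q \<and> y \<in> SY Q \<and> x' \<in> SX Q"
  unfolding standing_assms_Y_def is_state_machine_def by auto

lemma X0_in: "standing_assms_Y Q \<Longrightarrow> x \<in> SX0 Q \<Longrightarrow> x \<in> SX Q"
  unfolding standing_assms_Y_def is_state_machine_def by auto

lemma reach: "standing_assms_Y Q \<Longrightarrow> x \<in> SX Q \<Longrightarrow>
   \<exists>\<mu> \<nu> \<xi> k. (\<mu>, \<nu>, \<xi>) \<in> full_behavior Q \<and> \<xi> k = x"
  unfolding standing_assms_Y_def live_reachable_def by blast

lemma live: "standing_assms_Y Q \<Longrightarrow> x \<in> SX0 Q \<Longrightarrow>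
   \<exists>\<mu> \<nu> \<xi>. (\<mu>, \<nu>, \<xi>) \<in> full_behavior Q \<and> \<xi> 0 = x"
  unfolding standing_assms_Y_def live_reachable_def by blast

lemma fu:
  assumes "future_unique Q l l" "(\<mu>, \<nu>, \<xi>) \<in> full_behavior Q" "(\<mu>', \<nu>', \<xi>') \<in> full_behavior Q"
    "\<xi> k = \<xi>' k'"
  shows "fut \<nu> k l = fut \<nu>' k' l"
proof -
  have x: "\<xi> k \<in> SX Q" using fb_props[OF assms(2)] by blast
  have a: "fut \<nu> k l \<in> EI Q l l (\<xi> k)" "fut \<nu>' k' l \<in> EI Q l l (\<xi> k)"
    unfolding EI_ll using assms by metis+
  have "str_restr (fut \<nu> k l) 0 (int l - 1) = str_restr (fut \<nu>' k' l) 0 (int l - 1)"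
    using assms(1) x a unfolding future_unique_def by fastforce
  then show ?thesis by (simp add: sr_take fut_def)
qed

lemma EI_single:
  assumes "standing_assms_Y Q" "future_unique Q l l" "x \<in> SX Q" "\<zeta> \<in> EI Q l l x"
  shows "EI Q l l x = {\<zeta>}"
proof -
  obtain \<mu> \<nu> \<xi> k where h: "(\<mu>, \<nu>, \<xi>) \<in> full_behavior Q" "\<xi> k = x" "\<zeta> = fut \<nu> k l"
    using assms(4) unfolding EI_ll by blast
  show ?thesis
  proof
    show "EI Q l l x \<subseteq> {\<zeta>}"
    proof
      fix z assume "z \<in> EI Q l l x"
      then obtain \<mu>' \<nu>' \<xi>' k' where "(\<mu>', \<nu>', \<xi>') \<in> full_behavior Q" "\<xi>' k' = x" "z = fut \<nu>' k' l"
        unfolding EI_ll by blast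
      then show "z \<in> {\<zeta>}" using fu[OF assms(2) h(1)] h by force
    qed
  qed (use assms(4) in auto)
qed

lemma splice:
  assumes st: "standing_assms_Y Q" and h1: "(\<mu>, \<nu>, \<xi>) \<in> full_behavior Q" "\<xi> k = x"
    and d: "(x, u, y, x') \<in> Sdelta Q"
    and h2: "(\<mu>2, \<nu>2, \<xi>2) \<in> full_behavior Q" "\<xi>2 j = x'"
  shows "\<exists>\<mu>3 \<nu>3 \<xi>3. (\<mu>3, \<nu>3, \<xi>3) \<in> full_behavior Q \<and> \<xi>3 k = x \<and> \<xi>3 (Suc k) = x' \<and> \<nu>3 k = y"
proof -
  define \<mu>3 where "\<mu>3 t = (if t < k then \<mu> t else if t = k then u else \<mu>2 (t - Suc k + j))" for t
  define \<nu>3 where "\<nu>3 t = (if t < k then \<nu> t else if t = k then y else \<nu>2 (t - Suc k + j))" for t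
  define \<xi>3 where "\<xi>3 t = (if t \<le> k then \<xi> t else \<xi>2 (t - Suc k + j))" for t
  have di: "x \<in> SX Q \<and> u \<in> SU Q \<and> y \<in> SY Q \<and> x' \<in> SX Q" using delta_in[OF st d] .
  have "(\<mu>3, \<nu>3, \<xi>3) \<in> full_behavior Q"
    unfolding full_behavior_def
  proof (safe)
    fix t
    show "\<mu>3 t \<in> SU Q" "\<nu>3 t \<in> SY Q" "\<xi>3 t \<in> SX Q"
      unfolding \<mu>3_def \<nu>3_def \<xi>3_def using fb_props[OF h1(1)] fb_props[OF h2(1)] di by auto
    show "(\<xi>3 t, \<mu>3 t, \<nu>3 t, \<xi>3 (Suc t)) \<in> Sdelta Q"
    proof -
      consider "Suc t \<le> k" | "t = k" | "t > k" by linarith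
      then show ?thesis
      proof cases
        case 1 then show ?thesis unfolding \<mu>3_def \<nu>3_def \<xi>3_def using fb_props[OF h1(1)] by auto
      next
        case 2 then show ?thesis unfolding \<mu>3_def \<nu>3_def \<xi>3_def using d h1 h2 by auto
      next
        case 3
        then have "Suc t - Suc k + j = Suc (t - Suc k + j)" by simp
        then show ?thesis unfolding \<mu>3_def \<nu>3_def \<xi>3_def using 3 fb_props[OF h2(1), of "t - Suc k + j"] by auto
      qed
    qed
  next
    show "\<xi>3 0 \<in> SX0 Q" unfolding \<xi>3_def using fb_props[OF h1(1)] by auto
  qed
  moreover have "\<xi>3 k = x" "\<xi>3 (Suc k) = x'" "\<nu>3 k = y" unfolding \<xi>3_def \<nu>3_def using h1 h2 by auto
  ultimately show ?thesis by blast
qed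

lemma fut_step: "l \<ge> 1 \<Longrightarrow> fut \<nu> k l = Some (\<nu> k) # take (l - 1) (fut \<nu> (Suc k) l)"
  unfolding fut_def by (rule nth_equalityI) (auto simp: nth_Cons split: nat.splits)

lemma past_step: "l \<ge> 1 \<Longrightarrow> past \<nu> (Suc t) l = tl (past \<nu> t l) @ [Some (\<nu> t)]"
  unfolding past_def
  apply (rule nth_equalityI)
   apply (auto simp: nth_append nth_tl)
  apply (subgoal_tac "Suc (t+i) - l = t")
   apply simp
  by linarith

lemma past_fut: "past \<nu> (k + l) l = fut \<nu> k l"
  unfolding past_def fut_def by auto

lemma trans_fut:
  assumes st: "standing_assms_Y Q" and fuq: "future_unique Q l l"
    and d: "(x, u, y, x') \<in> Sdelta Q" and z: "\<zeta> \<in> EI Q l l x" and z': "\<zeta>' \<in> EI Q l l x'"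
  shows "\<exists>\<mu>3 \<nu>3 \<xi>3 k. (\<mu>3, \<nu>3, \<xi>3) \<in> full_behavior Q \<and> \<xi>3 k = x \<and> \<xi>3 (Suc k) = x' \<and> \<nu>3 k = y
     \<and> \<zeta> = fut \<nu>3 k l \<and> \<zeta>' = fut \<nu>3 (Suc k) l"
proof -
  have di: "x \<in> SX Q" "x' \<in> SX Q" using delta_in[OF st d] by auto
  obtain \<mu> \<nu> \<xi> k where h1: "(\<mu>, \<nu>, \<xi>) \<in> full_behavior Q" "\<xi> k = x" using reach[OF st di(1)] by blast
  obtain \<mu>2 \<nu>2 \<xi>2 j where h2: "(\<mu>2, \<nu>2, \<xi>2) \<in> full_behavior Q" "\<xi>2 j = x'" using reach[OF st di(2)] by blast
  obtain \<mu>3 \<nu>3 \<xi>3 where h3: "(\<mu>3, \<nu>3, \<xi>3) \<in> full_behavior Q" "\<xi>3 k = x" "\<xi>3 (Suc k) = x'" "\<nu>3 k = y"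
    using splice[OF st h1 d h2] by blast
  obtain \<mu>a \<nu>a \<xi>a ka where ha: "(\<mu>a, \<nu>a, \<xi>a) \<in> full_behavior Q" "\<xi>a ka = x" "\<zeta> = fut \<nu>a ka l"
    using z unfolding EI_ll by blast
  obtain \<mu>b \<nu>b \<xi>b kb where hb: "(\<mu>b, \<nu>b, \<xi>b) \<in> full_behavior Q" "\<xi>b kb = x'" "\<zeta>' = fut \<nu>b kb l"
    using z' unfolding EI_ll by blast
  have "\<zeta> = fut \<nu>3 k l" using fu[OF fuq ha(1) h3(1)] ha h3 by simp
  moreover have "\<zeta>' = fut \<nu>3 (Suc k) l" using fu[OF fuq hb(1) h3(1)] hb h3 by simp
  ultimately show ?thesis using h3 by blast
qed

lemma sr_l2: "l \<ge> 1 \<Longrightarrow> l - 1 \<le> length xs \<Longrightarrow> str_restr xs 0 (int l - 2) = take (l - 1) xs"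
  using sr_take[of "l - 1" xs] by (simp add: of_nat_diff)

lemma delta_ll:
  assumes "l \<ge> 1" "length \<zeta> = l" "length \<zeta>' = l"
  shows "(\<zeta>, u, y, \<zeta>') \<in> Sdelta (abstract_sm Q l l) \<longleftrightarrow> \<zeta> = Some y # take (l - 1) \<zeta>' \<and>
     (\<exists>x\<in>SX Q. \<exists>x'\<in>SX Q. \<zeta> \<in> EI Q l l x \<and> \<zeta>' \<in> EI Q l l x' \<and> (x, u, y, x') \<in> Sdelta Q)"
proof -
  have e: "str_restr \<zeta> 0 (int l - 1) = \<zeta>" using sr_take[of l \<zeta>] assms by simp
  have "str_restr ([Some y] @ str_restr \<zeta>' 0 (int l - 2)) 0 (int l - 1) = Some y # take (l - 1) \<zeta>'"
    using sr_l2[of l \<zeta>'] sr_take[of l "Some y # take (l - 1) \<zeta>'"] assms by simp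
  then show ?thesis unfolding abstract_sm_def using e by (simp add: sr_empty)
qed

lemma delta_l0:
  assumes "l \<ge> 1" "length \<eta> = l" "length \<eta>' = l"
  shows "(\<eta>, u, y, \<eta>') \<in> Sdelta (abstract_sm Q l 0) \<longleftrightarrow> \<eta>' = tl \<eta> @ [Some y] \<and>
     (\<exists>x\<in>SX Q. \<exists>x'\<in>SX Q. \<eta> \<in> EI Q l 0 x \<and> \<eta>' \<in> EI Q l 0 x' \<and> (x, u, y, x') \<in> Sdelta Q)"
proof -
  have e: "str_restr \<eta> 0 (int l - 1) = \<eta>" "str_restr \<eta>' 0 (int l - 1) = \<eta>'"
    using sr_take[of l \<eta>] sr_take[of l \<eta>'] assms by simp_all
  have "str_restr (\<eta> @ [Some y]) 1 (int l) = tl \<eta> @ [Some y]"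
    using sr_tl[of "\<eta> @ [Some y]" l] assms by (cases \<eta>) auto
  then show ?thesis unfolding abstract_sm_def using e by (simp add: sr_empty)
qed

definition good :: "('x, 'u, 'y) sm \<Rightarrow> nat \<Rightarrow> 'y option list \<Rightarrow> 'y option \<Rightarrow> bool" where
  "good Q l \<eta> c \<longleftrightarrow> (\<exists>x u y x'. c = Some y \<and> x \<in> SX Q \<and> x' \<in> SX Q \<and> (x, u, y, x') \<in> Sdelta Q \<and>
      \<eta> \<in> EI Q l 0 x \<and> tl \<eta> @ [Some y] \<in> EI Q l 0 x')"

lemma good_traj:
  assumes "l \<ge> 1" "(\<mu>, \<nu>, \<xi>) \<in> full_behavior Q"
  shows "good Q l (past \<nu> t l) (Some (\<nu> t))"
proof -
  have "past \<nu> t l \<in> EI Q l 0 (\<xi> t)" unfolding EI_l0 using assms by blast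
  moreover have "tl (past \<nu> t l) @ [Some (\<nu> t)] \<in> EI Q l 0 (\<xi> (Suc t))"
    unfolding EI_l0 past_step[OF assms(1), symmetric] using assms by blast
  ultimately show ?thesis unfolding good_def using fb_props[OF assms(2)] by blast
qed

lemma pf0_nth: "n < 2 * l \<Longrightarrow> (past \<nu> 0 l @ fut \<nu> 0 l) ! n = (if n < l then None else Some (\<nu> (n - l)))"
  unfolding past_def fut_def by (auto simp: nth_append)

lemma pf0_win: "i < l \<Longrightarrow> map (\<lambda>j. (past \<nu> 0 l @ fut \<nu> 0 l) ! (i + j)) [0..<l] = past \<nu> i l"
  unfolding past_def[of \<nu> i l] by (rule nth_equalityI) (auto simp: pf0_nth)

lemma shift_nth:
  assumes "l \<ge> 1" "length \<eta> = l" "length \<zeta>' = l" "\<zeta> = Some y # take (l - 1) \<zeta>'" "n < 2 * l - 1"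
  shows "(tl \<eta> @ [Some y] @ \<zeta>') ! n = (\<eta> @ \<zeta>) ! Suc n"
proof -
  consider "n < l - 1" | "n = l - 1" | "n \<ge> l" by linarith
  then show ?thesis
  proof cases
    case 1 then show ?thesis using assms by (auto simp: nth_append nth_tl)
  next
    case 2 then show ?thesis using assms by (auto simp: nth_append)
  next
    case 3
    then have "Suc n - l = Suc (n - l)" "n - l < l - 1" using assms by auto
    then show ?thesis using assms 3 by (auto simp: nth_append)
  qed
qed

lemma part1:
  assumes st: "standing_assms_Y Q" and l1: "l \<ge> 1" and fuq: "future_unique Q l l"
  shows "bisimilar_Y (quotient_sm Q l) (abstract_sm Q l l)"
proof -
  define R where "R = {(S, \<zeta>). S \<in> SX (quotient_sm Q l) \<and> \<zeta> \<in> S}"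
  have sx: "S \<in> SX (quotient_sm Q l) \<longleftrightarrow> (\<exists>x\<in>SX Q. S = EI Q l l x)" for S
    unfolding quotient_sm_def by auto
  have A: "sim_rel_Y (quotient_sm Q l) (abstract_sm Q l l) R"
    unfolding sim_rel_Y_def
  proof (intro conjI allI impI ballI)
    show "R \<subseteq> SX (quotient_sm Q l) \<times> SX (abstract_sm Q l l)"
      unfolding R_def by (auto simp: abstract_sm_def quotient_sm_def)
  next
    fix S assume "S \<in> SX0 (quotient_sm Q l)"
    then obtain x0 where x0: "x0 \<in> SX0 Q" "S = EI Q l l x0" unfolding quotient_sm_def by auto
    obtain \<mu> \<nu> \<xi> where h: "(\<mu>, \<nu>, \<xi>) \<in> full_behavior Q" "\<xi> 0 = x0" using live[OF st x0(1)] by blast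
    have z: "fut \<nu> 0 l \<in> EI Q l l x0" unfolding EI_ll using h by blast
    show "\<exists>x2\<in>SX0 (abstract_sm Q l l). (S, x2) \<in> R"
      using z x0 X0_in[OF st x0(1)] unfolding R_def by (auto simp: abstract_sm_def quotient_sm_def)
  next
    fix S \<zeta> u1 y1 S'
    assume a: "(S, \<zeta>) \<in> R \<and> (S, u1, y1, S') \<in> Sdelta (quotient_sm Q l)"
    then obtain xa xa' where w: "xa \<in> SX Q" "xa' \<in> SX Q" "S = EI Q l l xa" "S' = EI Q l l xa'"
      "(xa, u1, y1, xa') \<in> Sdelta Q" unfolding quotient_sm_def by auto
    have z: "\<zeta> \<in> EI Q l l xa" using a w unfolding R_def by auto
    obtain \<mu> \<nu> \<xi> k where r: "(\<mu>, \<nu>, \<xi>) \<in> full_behavior Q" "\<xi> k = xa'" using reach[OF st w(2)] by blast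
    have z': "fut \<nu> k l \<in> EI Q l l xa'" unfolding EI_ll using r by blast
    obtain \<mu>3 \<nu>3 \<xi>3 k3 where t: "(\<mu>3, \<nu>3, \<xi>3) \<in> full_behavior Q" "\<nu>3 k3 = y1"
      "\<zeta> = fut \<nu>3 k3 l" "fut \<nu> k l = fut \<nu>3 (Suc k3) l"
      using trans_fut[OF st fuq w(5) z z'] by blast
    have "(\<zeta>, u1, y1, fut \<nu> k l) \<in> Sdelta (abstract_sm Q l l)"
      apply (subst delta_ll[OF l1])
      using len_EI_ll[OF z] len_EI_ll[OF z'] fut_step[OF l1, of \<nu>3 k3] t w z z' by auto
    moreover have "(S', fut \<nu> k l) \<in> R" unfolding R_def sx using w z' by auto
    ultimately show "\<exists>u2 y2 x2'. (\<zeta>, u2, y2, x2') \<in> Sdelta (abstract_sm Q l l) \<and> (S', x2') \<in> R \<and> y1 = y2"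
      by blast
  qed
  have B: "sim_rel_Y (abstract_sm Q l l) (quotient_sm Q l) (converse R)"
    unfolding sim_rel_Y_def
  proof (intro conjI allI impI ballI)
    show "converse R \<subseteq> SX (abstract_sm Q l l) \<times> SX (quotient_sm Q l)"
      unfolding R_def by (auto simp: abstract_sm_def quotient_sm_def)
  next
    fix \<zeta> assume "\<zeta> \<in> SX0 (abstract_sm Q l l)"
    then obtain x0 where x0: "x0 \<in> SX0 Q" "\<zeta> \<in> EI Q l l x0" unfolding abstract_sm_def by auto
    show "\<exists>x2\<in>SX0 (quotient_sm Q l). (\<zeta>, x2) \<in> converse R"
      using x0 X0_in[OF st x0(1)] unfolding R_def sx by (auto simp: quotient_sm_def)
  next
    fix \<zeta> S u1 y1 \<zeta>'
    assume a: "(\<zeta>, S) \<in> converse R \<and> (\<zeta>, u1, y1, \<zeta>') \<in> Sdelta (abstract_sm Q l l)"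
    then obtain x where x: "x \<in> SX Q" "S = EI Q l l x" "\<zeta> \<in> S" unfolding R_def sx by auto
    from a obtain xa xa' where w: "xa \<in> SX Q" "xa' \<in> SX Q" "\<zeta> \<in> EI Q l l xa" "\<zeta>' \<in> EI Q l l xa'"
      "(xa, u1, y1, xa') \<in> Sdelta Q" unfolding abstract_sm_def by auto
    have "S = EI Q l l xa" using EI_single[OF st fuq x(1)] EI_single[OF st fuq w(1) w(3)] x by auto
    then have "(S, u1, y1, EI Q l l xa') \<in> Sdelta (quotient_sm Q l)"
      using w unfolding quotient_sm_def by auto
    moreover have "(\<zeta>', EI Q l l xa') \<in> converse R" unfolding R_def sx using w by auto
    ultimately show "\<exists>u2 y2 x2'. (S, u2, y2, x2') \<in> Sdelta (quotient_sm Q l) \<and> (\<zeta>', x2') \<in> converse R \<and> y1 = y2"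
      by blast
  qed
  show ?thesis unfolding bisimilar_Y_def using A B by blast
qed

lemma part2:
  assumes st: "standing_assms_Y Q" and l1: "l \<ge> 1" and fuq: "future_unique Q l l"
  shows "simulated_by_Y (abstract_sm Q l l) (abstract_sm Q l 0)"
proof -
  define R where "R = {(\<zeta>, \<eta>). \<zeta> \<in> SX (abstract_sm Q l l) \<and> \<eta> \<in> SX (abstract_sm Q l 0) \<and>
     (\<forall>i<l. good Q l (map (\<lambda>j. (\<eta> @ \<zeta>) ! (i + j)) [0..<l]) ((\<eta> @ \<zeta>) ! (i + l)))}"
  have "sim_rel_Y (abstract_sm Q l l) (abstract_sm Q l 0) R"
    unfolding sim_rel_Y_def
  proof (intro conjI allI impI ballI)
    show "R \<subseteq> SX (abstract_sm Q l l) \<times> SX (abstract_sm Q l 0)" unfolding R_def by auto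
  next
    fix \<zeta> assume "\<zeta> \<in> SX0 (abstract_sm Q l l)"
    then obtain x0 where x0: "x0 \<in> SX0 Q" "\<zeta> \<in> EI Q l l x0" unfolding abstract_sm_def by auto
    obtain \<mu> \<nu> \<xi> where h: "(\<mu>, \<nu>, \<xi>) \<in> full_behavior Q" "\<xi> 0 = x0" using live[OF st x0(1)] by blast
    obtain \<mu>a \<nu>a \<xi>a ka where ha: "(\<mu>a, \<nu>a, \<xi>a) \<in> full_behavior Q" "\<xi>a ka = x0" "\<zeta> = fut \<nu>a ka l"
      using x0(2) unfolding EI_ll by blast
    have zf: "\<zeta> = fut \<nu> 0 l" using fu[OF fuq ha(1) h(1)] ha h by simp
    have p: "past \<nu> 0 l \<in> EI Q l 0 x0" unfolding EI_l0 using h by blast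
    have x0X: "x0 \<in> SX Q" using X0_in[OF st x0(1)] .
    have "(\<zeta>, past \<nu> 0 l) \<in> R"
      unfolding R_def
    proof (clarify, intro conjI allI impI)
      show "\<zeta> \<in> SX (abstract_sm Q l l)" "past \<nu> 0 l \<in> SX (abstract_sm Q l 0)"
        using x0 x0X p by (auto simp: abstract_sm_def)
      fix i assume i: "i < l"
      have "(past \<nu> 0 l @ \<zeta>) ! (i + l) = Some (\<nu> i)" using i zf pf0_nth[of "i + l" l \<nu>] by simp
      then show "good Q l (map (\<lambda>j. (past \<nu> 0 l @ \<zeta>) ! (i + j)) [0..<l]) ((past \<nu> 0 l @ \<zeta>) ! (i + l))"
        using good_traj[OF l1 h(1), of i] pf0_win[OF i, of \<nu>] zf by simp
    qed
    moreover have "past \<nu> 0 l \<in> SX0 (abstract_sm Q l 0)" using x0 p by (auto simp: abstract_sm_def)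
    ultimately show "\<exists>x2\<in>SX0 (abstract_sm Q l 0). (\<zeta>, x2) \<in> R" by blast
  next
    fix \<zeta> \<eta> u1 y1 \<zeta>'
    assume a: "(\<zeta>, \<eta>) \<in> R \<and> (\<zeta>, u1, y1, \<zeta>') \<in> Sdelta (abstract_sm Q l l)"
    then have inR: "\<zeta> \<in> SX (abstract_sm Q l l)" "\<eta> \<in> SX (abstract_sm Q l 0)"
      "\<And>i. i < l \<Longrightarrow> good Q l (map (\<lambda>j. (\<eta> @ \<zeta>) ! (i + j)) [0..<l]) ((\<eta> @ \<zeta>) ! (i + l))"
      unfolding R_def by auto
    have lz: "length \<zeta> = l" using inR(1) len_EI_ll by (auto simp: abstract_sm_def)
    have le: "length \<eta> = l" using inR(2) len_EI_l0 by (auto simp: abstract_sm_def)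
    from a obtain xa xa' where w: "xa \<in> SX Q" "xa' \<in> SX Q" "\<zeta> \<in> EI Q l l xa" "\<zeta>' \<in> EI Q l l xa'"
      "(xa, u1, y1, xa') \<in> Sdelta Q" unfolding abstract_sm_def by auto
    have lz': "length \<zeta>' = l" using len_EI_ll[OF w(4)] .
    have d0: "(\<zeta>, u1, y1, \<zeta>') \<in> Sdelta (abstract_sm Q l l)" using a by (rule conjunct2)
    have zz: "\<zeta> = Some y1 # take (l - 1) \<zeta>'" using d0[unfolded delta_ll[OF l1 lz lz']] by (rule conjunct1)
    have w0: "map (\<lambda>j. (\<eta> @ \<zeta>) ! (0 + j)) [0..<l] = \<eta>"
      by (rule nth_equalityI) (auto simp: le nth_append)
    have o0: "(\<eta> @ \<zeta>) ! (0 + l) = Some y1" using le zz by (simp add: nth_append)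
    from inR(3)[of 0] l1 w0 o0 have "good Q l \<eta> (Some y1)" by simp
    then obtain x u x' where g: "x \<in> SX Q" "x' \<in> SX Q" "(x, u, y1, x') \<in> Sdelta Q"
      "\<eta> \<in> EI Q l 0 x" "tl \<eta> @ [Some y1] \<in> EI Q l 0 x'" unfolding good_def by blast
    define \<eta>' where "\<eta>' = tl \<eta> @ [Some y1]"
    have le': "length \<eta>' = l" unfolding \<eta>'_def using le l1 by simp
    have d: "(\<eta>, u, y1, \<eta>') \<in> Sdelta (abstract_sm Q l 0)"
      unfolding delta_l0[OF l1 le le'] using g unfolding \<eta>'_def by blast
    have sh: "\<And>n. n < 2 * l - 1 \<Longrightarrow> (\<eta>' @ \<zeta>') ! n = (\<eta> @ \<zeta>) ! Suc n"
      unfolding \<eta>'_def using shift_nth[OF l1 le lz' zz] by simp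
    obtain \<mu>3 \<nu>3 \<xi>3 k where t: "(\<mu>3, \<nu>3, \<xi>3) \<in> full_behavior Q" "\<nu>3 k = y1"
      "\<zeta> = fut \<nu>3 k l" "\<zeta>' = fut \<nu>3 (Suc k) l"
      using trans_fut[OF st fuq w(5) w(3) w(4)] by blast
    have "(\<zeta>', \<eta>') \<in> R"
      unfolding R_def
    proof (clarify, intro conjI allI impI)
      show "\<zeta>' \<in> SX (abstract_sm Q l l)" "\<eta>' \<in> SX (abstract_sm Q l 0)"
        using w g \<eta>'_def by (auto simp: abstract_sm_def)
      fix i assume i: "i < l"
      show "good Q l (map (\<lambda>j. (\<eta>' @ \<zeta>') ! (i + j)) [0..<l]) ((\<eta>' @ \<zeta>') ! (i + l))"
      proof (cases "i < l - 1")
        case True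
        have m1: "map (\<lambda>j. (\<eta>' @ \<zeta>') ! (i + j)) [0..<l] = map (\<lambda>j. (\<eta> @ \<zeta>) ! (Suc i + j)) [0..<l]"
          using True sh by (auto intro!: map_cong)
        have o1: "(\<eta>' @ \<zeta>') ! (i + l) = (\<eta> @ \<zeta>) ! (Suc i + l)" using True sh by simp
        show ?thesis unfolding m1 o1 using inR(3)[of "Suc i"] True by simp
      next
        case False
        then have ii: "i = l - 1" using i by simp
        have "map (\<lambda>j. (\<eta>' @ \<zeta>') ! (i + j)) [0..<l] = \<zeta>"
        proof (rule nth_equalityI)
          show "length (map (\<lambda>j. (\<eta>' @ \<zeta>') ! (i + j)) [0..<l]) = length \<zeta>" using lz by simp
          fix j assume "j < length (map (\<lambda>j. (\<eta>' @ \<zeta>') ! (i + j)) [0..<l])"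
          then have j: "j < l" by simp
          show "map (\<lambda>j. (\<eta>' @ \<zeta>') ! (i + j)) [0..<l] ! j = \<zeta> ! j"
          proof (cases j)
            case 0 then show ?thesis using ii le le' zz l1 unfolding \<eta>'_def
              by (simp add: nth_append)
          next
            case (Suc j')
            have e: "i + j = l + j'" using ii l1 Suc by simp
            have "(\<eta>' @ \<zeta>') ! (i + j) = \<zeta>' ! j'" unfolding e using le' by (simp add: nth_append)
            then show ?thesis using Suc j zz lz' by simp
          qed
        qed
        moreover have "(\<eta>' @ \<zeta>') ! (i + l) = Some (\<nu>3 (k + l))"
        proof -
          have e2: "i + l = length \<eta>' + (l - 1)" using ii l1 le' by simp
          show ?thesis unfolding e2 nth_append_length_plus using l1 t(4) unfolding fut_def by simp
        qed
        ultimately show ?thesis using good_traj[OF l1 t(1), of "k + l"] past_fut[of \<nu>3 k l] t(3) by simp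
      qed
    qed
    then show "\<exists>u2 y2 x2'. (\<eta>, u2, y2, x2') \<in> Sdelta (abstract_sm Q l 0) \<and> (\<zeta>', x2') \<in> R \<and> y1 = y2"
      using d by blast
  qed
  then show ?thesis unfolding simulated_by_Y_def by blast
qed

theorem corollary13:
  fixes Q :: "('x, 'u, 'y) sm" and l :: nat
  assumes "standing_assms_Y Q"
    and "l \<ge> 1"
    and "future_unique Q l l"
  shows "bisimilar_Y (quotient_sm Q l) (abstract_sm Q l l) \<and>
         simulated_by_Y (abstract_sm Q l l) (abstract_sm Q l 0)"
  using part1[OF assms] part2[OF assms] by blast

end
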